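(* The category of cubes $\overline{\square}$ generated by the maps $\delta_i^\alpha$, $\sigma_i$ and $\gamma_i$ is not shell-complete. In other terms, the inclusion $\overline{\square}\subset\widehat{\square}$ is strict.
   Context: $[0]=\{()\}$, $[n]=\{0,1\}^n$ ($n\ge1$) with the product order; ${\rm PoSet}$ is posets with strictly increasing maps. Face maps $\delta_i^\alpha:[n-1]\to[n]$ insert $\alpha\in\{0,1\}$ at position $i$. For $n\ge2$, $1\le i\le n-1$: the symmetry map $\sigma_i:[n]\to[n]$ swaps coordinates $i$ and $i+1$, and the transverse degeneracy $\gamma_i:[n]\to[n]$ is $(\epsilon_1,\dots,\epsilon_n)\mapsto(\epsilon_1,\dots,\epsilon_{i-1},\max(\epsilon_i,\epsilon_{i+1}),\min(\epsilon_i,\epsilon_{i+1}),\epsilon_{i+2},\dots,\epsilon_n)$. $\overline\square$ is the subcategory of ${\rm PoSet}$ with objects $[n]$, $n\ge0$, generated by all $\delta_i^\alpha,\sigma_i,\gamma_i$. A map is adjacency-preserving if strictly increasing and it sends pairs at Hamming distance $1$ to pairs at Hamming distance $1$; $\widehat\square$ is the category with objects $[n]$ and all adjacency-preserving maps. A category of cubes is a subcategory of ${\rm PoSet}$ with objects $[n]$ containing all face maps and consisting of adjacency-preserving maps. For such $\mathcal A$, with $\mathcal A[p]=\mathcal A(-,[p])$ and $\mathrm{cosk}_1^{\mathcal A}$ the right adjoint of truncation of presheaves on $\mathcal A$ to the full subcategory on $[0],[1]$, $\mathcal A$ is shell-complete if $\mathcal A[p]\to\mathrm{cosk}_1^{\mathcal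 A}(\mathcal A[p]_{\le1})$ is an isomorphism for all $p\ge2$. (The paper shows $\widehat\square$ is the unique shell-complete category of cubes.) *)

theory Defs
  imports "HOL-Library.FuncSet"
begin

text \<open>The poset [n] = {0,1}^n is modelled as boolean lists of length n (coordinate i of the
paper is list index i-1). A map [m] -> [n] is an extensional function on cube m, and a
category of cubes is a set of triples (m, n, f) with f : [m] -> [n].\<close>

definition cube :: "nat \<Rightarrow> bool list set" where
  "cube n = {xs. length xs = n}"

definition cle :: "bool list \<Rightarrow> bool list \<Rightarrow> bool" where
  "cle xs ys \<longleftrightarrow> length xs = length ys \<and> (\<forall>i<length xs. xs ! i \<longrightarrow> ys ! i)"

definition cless :: "bool list \<Rightarrow> bool list \<Rightarrow> bool" where
  "cless xs ys \<longleftrightarrow> cle xs ys \<and> xs \<noteq> ys"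

definition hamming :: "bool list \<Rightarrow> bool list \<Rightarrow> nat" where
  "hamming xs ys = card {i. i < length xs \<and> xs ! i \<noteq> ys ! i}"

type_synonym cmap = "nat \<times> nat \<times> (bool list \<Rightarrow> bool list)"

definition is_map :: "nat \<Rightarrow> nat \<Rightarrow> (bool list \<Rightarrow> bool list) \<Rightarrow> bool" where
  "is_map m n f \<longleftrightarrow> f \<in> cube m \<rightarrow>\<^sub>E cube n"

definition strictly_increasing :: "nat \<Rightarrow> (bool list \<Rightarrow> bool list) \<Rightarrow> bool" where
  "strictly_increasing m f \<longleftrightarrow>
     (\<forall>x\<in>cube m. \<forall>y\<in>cube m. cless x y \<longrightarrow> cless (f x) (f y))"

definition adjacency_preserving :: "nat \<Rightarrow> (bool list \<Rightarrow> bool list) \<Rightarrow> bool" where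
  "adjacency_preserving m f \<longleftrightarrow> strictly_increasing m f \<and>
     (\<forall>x\<in>cube m. \<forall>y\<in>cube m. hamming x y = 1 \<longrightarrow> hamming (f x) (f y) = 1)"

definition ccomp :: "nat \<Rightarrow> (bool list \<Rightarrow> bool list) \<Rightarrow> (bool list \<Rightarrow> bool list) \<Rightarrow> (bool list \<Rightarrow> bool list)" where
  "ccomp l g f = restrict (g \<circ> f) (cube l)"

definition cid :: "nat \<Rightarrow> (bool list \<Rightarrow> bool list)" where
  "cid n = restrict id (cube n)"

definition face :: "nat \<Rightarrow> nat \<Rightarrow> bool \<Rightarrow> (bool list \<Rightarrow> bool list)" where
  "face n i a = restrict (\<lambda>xs. take (i - 1) xs @ [a] @ drop (i - 1) xs) (cube (n - 1))"

definition sym_map :: "nat \<Rightarrow> nat \<Rightarrow> (bool list \<Rightarrow> bool list)" where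
  "sym_map n i = restrict (\<lambda>xs. xs[i - 1 := xs ! i, i := xs ! (i - 1)]) (cube n)"

definition tdeg :: "nat \<Rightarrow> nat \<Rightarrow> (bool list \<Rightarrow> bool list)" where
  "tdeg n i = restrict (\<lambda>xs. xs[i - 1 := max (xs ! (i - 1)) (xs ! i),
                                 i := min (xs ! (i - 1)) (xs ! i)]) (cube n)"

inductive_set cbar :: "cmap set" where
  idI: "(n, n, cid n) \<in> cbar"
| faceI: "1 \<le> n \<Longrightarrow> 1 \<le> i \<Longrightarrow> i \<le> n \<Longrightarrow> (n - 1, n, face n i a) \<in> cbar"
| symI: "2 \<le> n \<Longrightarrow> 1 \<le> i \<Longrightarrow> i \<le> n - 1 \<Longrightarrow> (n, n, sym_map n i) \<in> cbar"
| tdegI: "2 \<le> n \<Longrightarrow> 1 \<le> i \<Longrightarrow> i \<le> n - 1 \<Longrightarrow> (n, n, tdeg n i) \<in> cbar"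
| compI: "(l, m, f) \<in> cbar \<Longrightarrow> (m, n, g) \<in> cbar \<Longrightarrow> (l, n, ccomp l g f) \<in> cbar"

definition chat :: "cmap set" where
  "chat = {(m, n, f). is_map m n f \<and> adjacency_preserving m f}"

definition hom :: "cmap set \<Rightarrow> nat \<Rightarrow> nat \<Rightarrow> (bool list \<Rightarrow> bool list) set" where
  "hom A m n = {f. (m, n, f) \<in> A}"

text \<open>A morphism of 1-truncated presheaves A[n]_{<=1} -> A[p]_{<=1}: components
F_k : A([k],[n]) -> A([k],[p]) for k in {0,1} (encoded as F k), natural with respect to
all maps u in A([j],[k]), j,k <= 1.\<close>
definition trunc_nat :: "cmap set \<Rightarrow> nat \<Rightarrow> nat \<Rightarrow>
    (nat \<Rightarrow> (bool list \<Rightarrow> bool list) \<Rightarrow> (bool list \<Rightarrow> bool list)) \<Rightarrow> bool" where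
  "trunc_nat A n p F \<longleftrightarrow>
     (\<forall>k\<le>1. \<forall>x\<in>hom A k n. F k x \<in> hom A k p) \<and>
     (\<forall>j\<le>1. \<forall>k\<le>1. \<forall>u\<in>hom A j k. \<forall>x\<in>hom A k n.
        F j (ccomp j x u) = ccomp j (F k x) u)"

text \<open>Shell-completeness: for p >= 2 the unit A[p] -> cosk_1(A[p]_{<=1}) is an isomorphism,
i.e. for every n the map A([n],[p]) -> Hom(A[n]_{<=1}, A[p]_{<=1}), g |-> (x |-> g o x),
is a bijection.\<close>
definition shell_complete :: "cmap set \<Rightarrow> bool" where
  "shell_complete A \<longleftrightarrow> (\<forall>p\<ge>2. \<forall>n.
     (\<forall>g\<in>hom A n p. \<forall>g'\<in>hom A n p.
        (\<forall>k\<le>1. \<forall>x\<in>hom A k n. ccomp k g x = ccomp k g' x) \<longrightarrow> g = g') \<and>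
     (\<forall>F. trunc_nat A n p F \<longrightarrow>
        (\<exists>g\<in>hom A n p. \<forall>k\<le>1. \<forall>x\<in>hom A k n. F k x = ccomp k g x)))"

end

theory Submission
  imports Defs "HOL-Library.List_Lexorder" "HOL-Library.Multiset"
begin


definition rows :: "bool list list" where
  "rows = [[False,False,True,True],[False,True,False,True],[False,True,True,False],
           [True,False,False,True],[True,False,True,False],[True,True,False,False]]"

definition Wi :: "(bool list \<Rightarrow> bool list) \<Rightarrow> bool list list" where
  "Wi h = map (\<lambda>k. map (\<lambda>e. h e ! k) rows) [0..<4]"

definition unc :: "nat \<Rightarrow> nat \<Rightarrow> bool list list \<Rightarrow> bool list list" where
  "unc j k L = L[j := map2 max (L ! j) (L ! k), k := map2 min (L ! j) (L ! k)]"

definition Rlist :: "bool list list list" where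
  "Rlist = [[[False,False,False,False,False,False],[False,False,False,False,False,False],[True,True,True,True,True,True],[True,True,True,True,True,True]],
  [[False,False,False,False,False,False],[False,False,False,False,False,True],[True,True,True,True,True,False],[True,True,True,True,True,True]],
  [[False,False,False,False,False,False],[False,False,False,False,True,False],[True,True,True,True,False,True],[True,True,True,True,True,True]],
  [[False,False,False,False,False,False],[False,False,False,False,True,True],[True,True,True,True,False,False],[True,True,True,True,True,True]],
  [[False,False,False,False,False,False],[False,False,False,True,False,False],[True,True,True,False,True,True],[True,True,True,True,True,True]],
  [[False,False,False,False,False,False],[False,False,False,True,False,True],[True,True,True,False,True,False],[True,True,True,True,True,True]],
  [[False,False,False,False,False,False],[False,False,False,True,True,False],[True,True,True,False,False,True],[True,True,True,True,True,True]],
  [[False,False,False,False,False,False],[False,False,False,True,True,True],[True,True,True,False,False,False],[True,True,True,True,True,True]],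
  [[False,False,False,False,False,False],[False,False,False,True,True,True],[True,True,True,False,False,True],[True,True,True,True,True,False]],
  [[False,False,False,False,False,False],[False,False,False,True,True,True],[True,True,True,False,True,False],[True,True,True,True,False,True]],
  [[False,False,False,False,False,False],[False,False,False,True,True,True],[True,True,True,False,True,True],[True,True,True,True,False,False]],
  [[False,False,False,False,False,False],[False,False,True,False,False,False],[True,True,False,True,True,True],[True,True,True,True,True,True]],
  [[False,False,False,False,False,False],[False,False,True,False,False,True],[True,True,False,True,True,False],[True,True,True,True,True,True]],
  [[False,False,False,False,False,False],[False,False,True,False,True,False],[True,True,False,True,False,True],[True,True,True,True,True,True]],
  [[False,False,False,False,False,False],[False,False,True,False,True,True],[True,True,False,True,False,False],[True,True,True,True,True,True]],
  [[False,False,False,False,False,False],[False,False,True,True,False,False],[True,True,False,False,True,True],[True,True,True,True,True,True]],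
  [[False,False,False,False,False,False],[False,False,True,True,False,False],[True,True,False,True,True,True],[True,True,True,False,True,True]],
  [[False,False,False,False,False,False],[False,False,True,True,True,True],[True,True,False,False,False,False],[True,True,True,True,True,True]],
  [[False,False,False,False,False,False],[False,False,True,True,True,True],[True,True,False,True,False,False],[True,True,True,False,True,True]],
  [[False,False,False,False,False,False],[False,True,False,False,False,False],[True,False,True,True,True,True],[True,True,True,True,True,True]],
  [[False,False,False,False,False,False],[False,True,False,False,False,True],[True,False,True,True,True,False],[True,True,True,True,True,True]],
  [[False,False,False,False,False,False],[False,True,False,False,True,False],[True,False,True,True,False,True],[True,True,True,True,True,True]],
  [[False,False,False,False,False,False],[False,True,False,False,True,False],[True,False,True,True,True,True],[True,True,True,True,False,True]],
  [[False,False,False,False,False,False],[False,True,False,True,False,False],[True,False,True,False,True,True],[True,True,True,True,True,True]],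
  [[False,False,False,False,False,False],[False,True,False,True,False,True],[True,False,True,False,True,False],[True,True,True,True,True,True]],
  [[False,False,False,False,False,False],[False,True,False,True,True,True],[True,False,True,False,False,False],[True,True,True,True,True,True]],
  [[False,False,False,False,False,False],[False,True,False,True,True,True],[True,False,True,False,True,False],[True,True,True,True,False,True]],
  [[False,False,False,False,False,False],[False,True,True,False,False,False],[True,False,False,True,True,True],[True,True,True,True,True,True]],
  [[False,False,False,False,False,False],[False,True,True,False,False,True],[True,False,False,True,True,False],[True,True,True,True,True,True]],
  [[False,False,False,False,False,False],[False,True,True,False,False,True],[True,False,False,True,True,True],[True,True,True,True,True,False]],
  [[False,False,False,False,False,False],[False,True,True,False,False,True],[True,False,True,True,True,False],[True,True,False,True,True,True]],
  [[False,False,False,False,False,False],[False,True,True,False,False,True],[True,False,True,True,True,True],[True,True,False,True,True,False]],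
  [[False,False,False,False,False,False],[False,True,True,False,True,True],[True,False,False,True,False,False],[True,True,True,True,True,True]],
  [[False,False,False,False,False,False],[False,True,True,False,True,True],[True,False,True,True,True,True],[True,True,False,True,False,False]],
  [[False,False,False,False,False,False],[False,True,True,True,False,True],[True,False,False,False,True,False],[True,True,True,True,True,True]],
  [[False,False,False,False,False,False],[False,True,True,True,False,True],[True,False,True,False,True,False],[True,True,False,True,True,True]],
  [[False,False,False,False,False,False],[False,True,True,True,True,False],[True,False,False,False,False,True],[True,True,True,True,True,True]],
  [[False,False,False,False,False,False],[False,True,True,True,True,True],[True,False,False,False,False,False],[True,True,True,True,True,True]],
  [[False,False,False,False,False,False],[False,True,True,True,True,True],[True,False,False,False,False,True],[True,True,True,True,True,False]],
  [[False,False,False,False,False,False],[False,True,True,True,True,True],[True,False,True,False,True,False],[True,True,False,True,False,True]],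
  [[False,False,False,False,False,False],[False,True,True,True,True,True],[True,False,True,False,True,True],[True,True,False,True,False,False]],
  [[False,False,False,False,False,True],[False,False,True,False,True,False],[True,True,False,True,False,False],[True,True,True,True,True,True]],
  [[False,False,False,False,False,True],[False,True,False,True,False,False],[True,False,True,False,True,False],[True,True,True,True,True,True]],
  [[False,False,False,False,False,True],[False,True,True,True,True,False],[True,False,False,False,False,False],[True,True,True,True,True,True]],
  [[False,False,False,False,False,True],[False,True,True,True,True,True],[True,False,False,False,False,False],[True,True,True,True,True,False]],
  [[False,False,False,False,False,True],[False,True,True,True,True,True],[True,False,True,False,True,False],[True,True,False,True,False,False]],
  [[False,False,False,False,True,False],[False,False,True,False,False,True],[True,True,False,True,False,False],[True,True,True,True,True,True]],
  [[False,False,False,False,True,False],[False,True,False,False,False,False],[True,False,True,True,False,True],[True,True,True,True,True,True]],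
  [[False,False,False,False,True,False],[False,True,False,False,False,False],[True,False,True,True,True,True],[True,True,True,True,False,True]],
  [[False,False,False,False,True,False],[False,True,True,False,False,True],[True,False,False,True,False,False],[True,True,True,True,True,True]],
  [[False,False,False,False,True,False],[False,True,True,False,False,True],[True,False,True,True,True,True],[True,True,False,True,False,False]],
  [[False,False,False,False,True,True],[False,False,True,False,False,False],[True,True,False,True,False,False],[True,True,True,True,True,True]],
  [[False,False,False,True,False,False],[False,False,True,False,False,False],[True,True,False,False,True,True],[True,True,True,True,True,True]],
  [[False,False,False,True,False,False],[False,False,True,False,False,False],[True,True,False,True,True,True],[True,True,True,False,True,True]],
  [[False,False,False,True,False,False],[False,True,False,False,False,True],[True,False,True,False,True,False],[True,True,True,True,True,True]],
  [[False,False,False,True,False,False],[False,True,True,False,False,True],[True,False,False,False,True,False],[True,True,True,True,True,True]],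
  [[False,False,False,True,False,False],[False,True,True,False,False,True],[True,False,True,False,True,False],[True,True,False,True,True,True]],
  [[False,False,False,True,False,True],[False,True,False,False,False,False],[True,False,True,False,True,False],[True,True,True,True,True,True]],
  [[False,False,False,True,True,False],[False,True,True,False,False,True],[True,False,False,False,False,False],[True,True,True,True,True,True]],
  [[False,False,False,True,True,True],[False,False,True,False,False,False],[True,True,False,False,False,False],[True,True,True,True,True,True]],
  [[False,False,False,True,True,True],[False,False,True,False,False,False],[True,True,False,True,False,False],[True,True,True,False,True,True]],
  [[False,False,False,True,True,True],[False,True,False,False,False,False],[True,False,True,False,False,False],[True,True,True,True,True,True]],
  [[False,False,False,True,True,True],[False,True,False,False,False,False],[True,False,True,False,True,False],[True,True,True,True,False,True]],
  [[False,False,False,True,True,True],[False,True,True,False,False,False],[True,False,False,False,False,False],[True,True,True,True,True,True]],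
  [[False,False,False,True,True,True],[False,True,True,False,False,True],[True,False,False,False,False,False],[True,True,True,True,True,False]],
  [[False,False,False,True,True,True],[False,True,True,False,False,True],[True,False,True,False,True,False],[True,True,False,True,False,False]]]"

lemma Rcheck: "\<forall>r\<in>set Rlist. \<forall>a\<in>set r. \<forall>b\<in>set (remove1 a r).
   sort (map2 max a b # map2 min a b # remove1 b (remove1 a r)) \<in> set Rlist"
  by code_simp




definition hl :: "bool list \<Rightarrow> bool list \<Rightarrow> nat" where
  "hl x y = length (filter (\<lambda>(a,b). a \<noteq> b) (zip x y))"

lemma hamming_hl: "length x = length y \<Longrightarrow> hamming x y = hl x y"
  unfolding hamming_def hl_def
  by (simp add: length_filter_conv_card cong: conj_cong)

lemma cle_alt: "cle x y \<longleftrightarrow> length x = length y \<and> list_all2 (\<lambda>a b. a \<longrightarrow> b) x y"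
  unfolding cle_def by (auto simp: list_all2_conv_all_nth)

lemma hl_app: "length p = length p' \<Longrightarrow> hl (p @ s) (p' @ s') = hl p p' + hl s s'"
  unfolding hl_def by simp

lemma cle_app: "length p = length p' \<Longrightarrow> cle (p @ s) (p' @ s') \<longleftrightarrow> cle p p' \<and> cle s s'"
  unfolding cle_alt by (auto simp: list_all2_append list_all2_lengthD)

lemma decomp2: "1 \<le> i \<Longrightarrow> i < length x \<Longrightarrow>
   x = take (i - 1) x @ [x ! (i - 1), x ! i] @ drop (i + 1) x"
proof -
  assume a: "1 \<le> i" "i < length x"
  have "take (i + 1) x = take (i - 1) x @ [x ! (i - 1), x ! i]"
    using a by (metis Suc_eq_plus1 Suc_lessD Suc_pred' append.assoc append_Cons append_Nil
        less_le_trans take_Suc_conv_app_nth zero_less_one)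
  then show ?thesis by (metis append.assoc append_take_drop_id)
qed

lemma sym_form: "1 \<le> i \<Longrightarrow> i < length x \<Longrightarrow>
   x[i - 1 := x ! i, i := x ! (i - 1)] = take (i - 1) x @ [x ! i, x ! (i - 1)] @ drop (i + 1) x"
  by (rule nth_equalityI) (auto simp: nth_append nth_list_update min_def)

lemma tdeg_form: "1 \<le> i \<Longrightarrow> i < length x \<Longrightarrow>
   x[i - 1 := max (x ! (i - 1)) (x ! i), i := min (x ! (i - 1)) (x ! i)] =
   take (i - 1) x @ [max (x ! (i - 1)) (x ! i), min (x ! (i - 1)) (x ! i)] @ drop (i + 1) x"
  by (rule nth_equalityI) (auto simp: nth_append nth_list_update min_def)

lemma hl_refl[simp]: "hl x x = 0"
  unfolding hl_def by (induct x) auto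

lemma hl_cons: "hl (a # x) (b # y) = (if a = b then 0 else 1) + hl x y"
  unfolding hl_def by simp

lemma cle_cons: "cle (a # x) (b # y) \<longleftrightarrow> (a \<longrightarrow> b) \<and> cle x y"
  unfolding cle_alt by auto

lemma cle_nil[simp]: "cle [] []" unfolding cle_alt by auto

lemma in_cube[simp]: "x \<in> cube n \<longleftrightarrow> length x = n"
  unfolding cube_def by simp

lemma face_app: "x \<in> cube (n - 1) \<Longrightarrow> face n i a x = take (i - 1) x @ [a] @ drop (i - 1) x"
  unfolding face_def by simp

lemma face_cube: "1 \<le> i \<Longrightarrow> i \<le> n \<Longrightarrow> x \<in> cube (n - 1) \<Longrightarrow> face n i a x \<in> cube n"
  by (simp add: face_app)

lemma face_props:
  assumes "1 \<le> i" "i \<le> n" "x \<in> cube (n - 1)" "y \<in> cube (n - 1)"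
  shows "hl (face n i a x) (face n i a y) = hl x y"
    and "cle (face n i a x) (face n i a y) \<longleftrightarrow> cle x y"
    and "face n i a x = face n i a y \<longleftrightarrow> x = y"
proof -
  have l: "length (take (i - 1) x) = length (take (i - 1) y)" using assms by simp
  have ld: "length (drop (i - 1) x) = length (drop (i - 1) y)" using assms by simp
  have x: "x = take (i - 1) x @ drop (i - 1) x" and y: "y = take (i - 1) y @ drop (i - 1) y" by simp_all
  show "hl (face n i a x) (face n i a y) = hl x y"
    using assms l hl_app[OF l, of "drop (i - 1) x" "drop (i - 1) y"]
    by (simp add: face_app hl_app hl_cons)
  show "cle (face n i a x) (face n i a y) \<longleftrightarrow> cle x y"
    using assms l cle_app[OF l, of "drop (i - 1) x" "drop (i - 1) y"]
    by (simp add: face_app cle_app cle_cons)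
  show "face n i a x = face n i a y \<longleftrightarrow> x = y"
  proof
    assume "face n i a x = face n i a y"
    then have "take (i - 1) x = take (i - 1) y \<and> drop (i - 1) x = drop (i - 1) y"
      using assms l by (simp add: face_app)
    then show "x = y" by (metis append_take_drop_id)
  qed simp
qed

lemma sym_app: "1 \<le> i \<Longrightarrow> i < n \<Longrightarrow> x \<in> cube n \<Longrightarrow>
   sym_map n i x = take (i - 1) x @ [x ! i, x ! (i - 1)] @ drop (i + 1) x"
  unfolding sym_map_def using sym_form[of i x] by simp

lemma tdeg_app: "1 \<le> i \<Longrightarrow> i < n \<Longrightarrow> x \<in> cube n \<Longrightarrow>
   tdeg n i x = take (i - 1) x @ [max (x ! (i - 1)) (x ! i), min (x ! (i - 1)) (x ! i)] @ drop (i + 1) x"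
  unfolding tdeg_def using tdeg_form[of i x] by simp

lemma sym_cube: "x \<in> cube n \<Longrightarrow> sym_map n i x \<in> cube n"
  unfolding sym_map_def by simp

lemma tdeg_cube: "x \<in> cube n \<Longrightarrow> tdeg n i x \<in> cube n"
  unfolding tdeg_def by simp

lemma sym_props:
  assumes "1 \<le> i" "i < n" "x \<in> cube n" "y \<in> cube n"
  shows "hl (sym_map n i x) (sym_map n i y) = hl x y"
    and "cle (sym_map n i x) (sym_map n i y) \<longleftrightarrow> cle x y"
    and "sym_map n i x = sym_map n i y \<longleftrightarrow> x = y"
proof -
  have l: "length (take (i - 1) x) = length (take (i - 1) y)" using assms by simp
  have x: "x = take (i - 1) x @ [x ! (i - 1), x ! i] @ drop (i + 1) x"
    using decomp2[of i x] assms by simp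
  have y: "y = take (i - 1) y @ [y ! (i - 1), y ! i] @ drop (i + 1) y"
    using decomp2[of i y] assms by simp
  have hx: "hl x y = hl (take (i - 1) x) (take (i - 1) y) + hl [x ! (i - 1), x ! i] [y ! (i - 1), y ! i]
     + hl (drop (i + 1) x) (drop (i + 1) y)"
    using assms by (subst x, subst y, simp add: hl_app l hl_cons)
  have cx: "cle x y \<longleftrightarrow> cle (take (i - 1) x) (take (i - 1) y) \<and> cle [x ! (i - 1), x ! i] [y ! (i - 1), y ! i]
     \<and> cle (drop (i + 1) x) (drop (i + 1) y)"
    using assms by (subst x, subst y, simp add: cle_app l cle_cons)
  show "hl (sym_map n i x) (sym_map n i y) = hl x y"
    using assms by (simp add: sym_app hl_app l hx hl_cons)
  show "cle (sym_map n i x) (sym_map n i y) \<longleftrightarrow> cle x y"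
    using assms by (simp add: sym_app cle_app l cx cle_cons) blast
  show "sym_map n i x = sym_map n i y \<longleftrightarrow> x = y"
  proof
    assume "sym_map n i x = sym_map n i y"
    then have "take (i - 1) x = take (i - 1) y \<and> [x ! (i - 1), x ! i] = [y ! (i - 1), y ! i] \<and> drop (i + 1) x = drop (i + 1) y"
      using assms l by (simp add: sym_app)
    then show "x = y" using x y by metis
  qed simp
qed

lemma tdeg_props:
  assumes "1 \<le> i" "i < n" "x \<in> cube n" "y \<in> cube n"
  shows "hl x y = 1 \<Longrightarrow> hl (tdeg n i x) (tdeg n i y) = 1"
    and "cle x y \<Longrightarrow> cle (tdeg n i x) (tdeg n i y)"
    and "cle x y \<Longrightarrow> tdeg n i x = tdeg n i y \<Longrightarrow> x = y"
proof -
  have l: "length (take (i - 1) x) = length (take (i - 1) y)" using assms by simp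
  have x: "x = take (i - 1) x @ [x ! (i - 1), x ! i] @ drop (i + 1) x"
    using decomp2[of i x] assms by simp
  have y: "y = take (i - 1) y @ [y ! (i - 1), y ! i] @ drop (i + 1) y"
    using decomp2[of i y] assms by simp
  have hx: "hl x y = hl (take (i - 1) x) (take (i - 1) y) + hl [x ! (i - 1), x ! i] [y ! (i - 1), y ! i]
     + hl (drop (i + 1) x) (drop (i + 1) y)"
    using assms by (subst x, subst y, simp add: hl_app l hl_cons)
  have cx: "cle x y \<longleftrightarrow> cle (take (i - 1) x) (take (i - 1) y) \<and> cle [x ! (i - 1), x ! i] [y ! (i - 1), y ! i]
     \<and> cle (drop (i + 1) x) (drop (i + 1) y)"
    using assms by (subst x, subst y, simp add: cle_app l cle_cons)
  show "hl x y = 1 \<Longrightarrow> hl (tdeg n i x) (tdeg n i y) = 1"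
    using assms by (auto simp add: tdeg_app hl_app l hx hl_cons max_def min_def split: if_splits)
  show "cle x y \<Longrightarrow> cle (tdeg n i x) (tdeg n i y)"
    using assms by (auto simp add: tdeg_app cle_app l cx cle_cons)
  show "cle x y \<Longrightarrow> tdeg n i x = tdeg n i y \<Longrightarrow> x = y"
  proof -
    assume c: "cle x y" and e: "tdeg n i x = tdeg n i y"
    then have "take (i - 1) x = take (i - 1) y \<and> [max (x ! (i - 1)) (x ! i), min (x ! (i - 1)) (x ! i)]
       = [max (y ! (i - 1)) (y ! i), min (y ! (i - 1)) (y ! i)] \<and> drop (i + 1) x = drop (i + 1) y"
      using assms l by (simp add: tdeg_app)
    moreover have "(x ! (i - 1) \<longrightarrow> y ! (i - 1)) \<and> (x ! i \<longrightarrow> y ! i)" using c cx by (simp add: cle_cons)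
    ultimately have "take (i - 1) x = take (i - 1) y \<and> [x ! (i - 1), x ! i] = [y ! (i - 1), y ! i] \<and> drop (i + 1) x = drop (i + 1) y"
      by (auto simp: max_def min_def split: if_splits)
    then show "x = y" using x y by metis
  qed
qed

lemma ham_hl: "x \<in> cube n \<Longrightarrow> y \<in> cube n \<Longrightarrow> hamming x y = hl x y"
  by (simp add: hamming_hl)

lemma chat_iff: "(m, n, f) \<in> chat \<longleftrightarrow>
   (\<forall>x\<in>cube m. f x \<in> cube n) \<and> f \<in> extensional (cube m) \<and>
   (\<forall>x\<in>cube m. \<forall>y\<in>cube m. cle x y \<and> x \<noteq> y \<longrightarrow> cle (f x) (f y) \<and> f x \<noteq> f y) \<and>
   (\<forall>x\<in>cube m. \<forall>y\<in>cube m. hl x y = 1 \<longrightarrow> hl (f x) (f y) = 1)"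
  unfolding chat_def is_map_def adjacency_preserving_def strictly_increasing_def cless_def
  by (auto simp: PiE_iff hamming_hl simp del: in_cube) (auto simp: hamming_hl)

lemma ccomp_app: "x \<in> cube l \<Longrightarrow> ccomp l g f x = g (f x)"
  unfolding ccomp_def by simp

lemma chat_comp: "(l, m, f) \<in> chat \<Longrightarrow> (m, n, g) \<in> chat \<Longrightarrow> (l, n, ccomp l g f) \<in> chat"
  unfolding chat_iff by (simp add: ccomp_app ccomp_def del: in_cube)

lemma cid_chat: "(n, n, cid n) \<in> chat"
  by (auto simp: chat_iff cid_def)

lemma face_chat: "1 \<le> n \<Longrightarrow> 1 \<le> i \<Longrightarrow> i \<le> n \<Longrightarrow> (n - 1, n, face n i a) \<in> chat"
  unfolding chat_iff
  by (simp add: face_cube face_props del: in_cube) (simp add: face_def)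

lemma sym_chat: "1 \<le> i \<Longrightarrow> i < n \<Longrightarrow> (n, n, sym_map n i) \<in> chat"
  unfolding chat_iff
  by (simp add: sym_cube sym_props del: in_cube) (simp add: sym_map_def)

lemma tdeg_chat: "1 \<le> i \<Longrightarrow> i < n \<Longrightarrow> (n, n, tdeg n i) \<in> chat"
  unfolding chat_iff
  by (simp add: tdeg_cube tdeg_props del: in_cube) (auto simp add: tdeg_def tdeg_props)

lemma cbar_chat: "(l, m, f) \<in> cbar \<Longrightarrow> (l, m, f) \<in> chat"
proof (induction rule: cbar.induct)
  case (idI n) then show ?case by (rule cid_chat)
next
  case (faceI n i a) then show ?case by (rule face_chat)
next
  case (symI n i) then show ?case by (intro sym_chat) auto
next
  case (tdegI n i) then show ?case by (intro tdeg_chat) auto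
next
  case (compI l m f n g) then show ?case by (blast intro: chat_comp)
qed

inductive_set gen :: "nat \<Rightarrow> (bool list \<Rightarrow> bool list) set" for n where
  gid: "cid n \<in> gen n"
| gsym: "h \<in> gen n \<Longrightarrow> 1 \<le> i \<Longrightarrow> i < n \<Longrightarrow> ccomp n (sym_map n i) h \<in> gen n"
| gtdeg: "h \<in> gen n \<Longrightarrow> 1 \<le> i \<Longrightarrow> i < n \<Longrightarrow> ccomp n (tdeg n i) h \<in> gen n"

lemma gen_map: "h \<in> gen n \<Longrightarrow> (\<forall>x\<in>cube n. h x \<in> cube n) \<and> h \<in> extensional (cube n)"
  by (induction rule: gen.induct)
     (auto simp: cid_def ccomp_def sym_cube tdeg_cube extensional_def simp del: in_cube)

lemma gen_cbar: "h \<in> gen n \<Longrightarrow> (n, n, h) \<in> cbar"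
proof (induction rule: gen.induct)
  case gid then show ?case by (rule cbar.idI)
next
  case (gsym h i)
  have "(n, n, sym_map n i) \<in> cbar" using gsym by (intro cbar.symI) auto
  then show ?case using gsym cbar.compI by blast
next
  case (gtdeg h i)
  have "(n, n, tdeg n i) \<in> cbar" using gtdeg by (intro cbar.tdegI) auto
  then show ?case using gtdeg cbar.compI by blast
qed

lemma ccomp_assoc: "\<forall>x\<in>cube l. h x \<in> cube m \<Longrightarrow>
   ccomp l (ccomp m g k) h = ccomp l g (ccomp l k h)"
  unfolding ccomp_def by (rule ext) (simp del: in_cube)

lemma ccomp_cid_left: "\<forall>x\<in>cube l. h x \<in> cube m \<Longrightarrow> h \<in> extensional (cube l) \<Longrightarrow>
   ccomp l (cid m) h = h"
  unfolding ccomp_def cid_def by (rule ext) (auto simp del: in_cube simp: extensional_def)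

lemma ccomp_cid_right: "g \<in> extensional (cube l) \<Longrightarrow> ccomp l g (cid l) = g"
  unfolding ccomp_def cid_def by (rule ext) (auto simp del: in_cube simp: extensional_def)

lemma gen_comp: "g \<in> gen n \<Longrightarrow> h \<in> gen n \<Longrightarrow> ccomp n g h \<in> gen n"
proof (induction rule: gen.induct)
  case gid then show ?case using gen_map[of h n] ccomp_cid_left by simp
next
  case (gsym g i)
  then show ?case using gen_map[of h n] ccomp_assoc[of n h n] gen.gsym by simp
next
  case (gtdeg g i)
  then show ?case using gen_map[of h n] ccomp_assoc[of n h n] gen.gtdeg by simp
qed

lemma cbar_gen: "(l, m, f) \<in> cbar \<Longrightarrow> l \<le> m \<and> (l = m \<longrightarrow> f \<in> gen m)"
proof (induction rule: cbar.induct)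
  case (idI n) then show ?case by (simp add: gen.gid)
next
  case (faceI n i a) then show ?case by auto
next
  case (symI n i)
  have "ccomp n (sym_map n i) (cid n) \<in> gen n" using symI by (intro gen.gsym gen.gid) auto
  moreover have "ccomp n (sym_map n i) (cid n) = sym_map n i"
    by (rule ccomp_cid_right) (simp add: sym_map_def)
  ultimately show ?case by simp
next
  case (tdegI n i)
  have "ccomp n (tdeg n i) (cid n) \<in> gen n" using tdegI by (intro gen.gtdeg gen.gid) auto
  moreover have "ccomp n (tdeg n i) (cid n) = tdeg n i"
    by (rule ccomp_cid_right) (simp add: tdeg_def)
  ultimately show ?case by simp
next
  case (compI l m f n g) then show ?case using gen_comp by auto
qed





lemma rows_cube: "e \<in> set rows \<Longrightarrow> e \<in> cube 4"
  unfolding rows_def by auto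

lemma len_Wi[simp]: "length (Wi h) = 4"
  unfolding Wi_def by simp

lemma Wi_nth: "k < 4 \<Longrightarrow> Wi h ! k = map (\<lambda>e. h e ! k) rows"
  unfolding Wi_def by (simp del: upt_rec_numeral)

lemma W_sym:
  assumes h: "h \<in> gen 4" and i: "1 \<le> i" "i < 4"
  shows "Wi (ccomp 4 (sym_map 4 i) h) = (Wi h)[i - 1 := Wi h ! i, i := Wi h ! (i - 1)]"
proof (rule nth_equalityI)
  have ev: "ccomp 4 (sym_map 4 i) h e = (h e)[i - 1 := h e ! i, i := h e ! (i - 1)]"
    if "e \<in> set rows" for e
    using gen_map[OF h] rows_cube[OF that] by (simp add: ccomp_app sym_map_def del: in_cube)
  have l: "length (h e) = 4" if "e \<in> set rows" for e
    using gen_map[OF h] rows_cube[OF that] by simp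
  show "length (Wi (ccomp 4 (sym_map 4 i) h)) = length ((Wi h)[i - 1 := Wi h ! i, i := Wi h ! (i - 1)])"
    by simp
  fix k assume "k < length (Wi (ccomp 4 (sym_map 4 i) h))"
  then have k: "k < 4" by simp
  have "Wi (ccomp 4 (sym_map 4 i) h) ! k = map (\<lambda>e. (h e)[i - 1 := h e ! i, i := h e ! (i - 1)] ! k) rows"
    using k ev by (simp add: Wi_nth)
  also have "\<dots> = map (\<lambda>e. if k = i then h e ! (i - 1) else if k = i - 1 then h e ! i else h e ! k) rows"
    by (rule map_cong) (use l i k in \<open>auto simp: nth_list_update\<close>)
  also have "\<dots> = (Wi h)[i - 1 := Wi h ! i, i := Wi h ! (i - 1)] ! k"
    using i k by (auto simp: nth_list_update Wi_nth)
  finally show "Wi (ccomp 4 (sym_map 4 i) h) ! k = (Wi h)[i - 1 := Wi h ! i, i := Wi h ! (i - 1)] ! k" .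
qed

lemma W_tdeg:
  assumes h: "h \<in> gen 4" and i: "1 \<le> i" "i < 4"
  shows "Wi (ccomp 4 (tdeg 4 i) h) = unc (i - 1) i (Wi h)"
proof (rule nth_equalityI)
  have ev: "ccomp 4 (tdeg 4 i) h e = (h e)[i - 1 := max (h e ! (i - 1)) (h e ! i), i := min (h e ! (i - 1)) (h e ! i)]"
    if "e \<in> set rows" for e
    using gen_map[OF h] rows_cube[OF that] by (simp add: ccomp_app tdeg_def del: in_cube)
  have l: "length (h e) = 4" if "e \<in> set rows" for e
    using gen_map[OF h] rows_cube[OF that] by simp
  show "length (Wi (ccomp 4 (tdeg 4 i) h)) = length (unc (i - 1) i (Wi h))"
    by (simp add: unc_def)
  fix k assume "k < length (Wi (ccomp 4 (tdeg 4 i) h))"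
  then have k: "k < 4" by simp
  have "Wi (ccomp 4 (tdeg 4 i) h) ! k = map (\<lambda>e. (h e)[i - 1 := max (h e ! (i - 1)) (h e ! i), i := min (h e ! (i - 1)) (h e ! i)] ! k) rows"
    using k ev by (simp add: Wi_nth)
  also have "\<dots> = map (\<lambda>e. if k = i then min (h e ! (i - 1)) (h e ! i) else if k = i - 1 then max (h e ! (i - 1)) (h e ! i) else h e ! k) rows"
    by (rule map_cong) (use l i k in \<open>auto simp: nth_list_update\<close>)
  also have "\<dots> = unc (i - 1) i (Wi h) ! k"
    using i k by (auto simp: nth_list_update Wi_nth unc_def zip_map_map zip_same_conv_map)
  finally show "Wi (ccomp 4 (tdeg 4 i) h) ! k = unc (i - 1) i (Wi h) ! k" .
qed

lemma sort_mset_eq: "mset xs = mset ys \<Longrightarrow> sort xs = sort ys"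
  by (metis sorted_list_of_multiset_mset)

lemma nth_in_diff:
  assumes a: "j < length L" "k < length L" "j \<noteq> k"
  shows "L ! k \<in># mset L - {#L ! j#}"
proof -
  have e: "L = take j L @ L ! j # drop (Suc j) L" using a(1) by (rule id_take_nth_drop)
  have m: "mset L - {#L ! j#} = mset (take j L @ drop (Suc j) L)"
    using arg_cong[where f=mset, OF e] by simp
  have "L ! k \<in> set (take j L @ drop (Suc j) L)"
  proof (cases "k < j")
    case True
    then have "L ! k = take j L ! k" by simp
    moreover have "k < length (take j L)" using True a by simp
    ultimately show ?thesis by (metis Un_iff nth_mem set_append)
  next
    case False
    then have k: "k > j" using a by simp
    then have "L ! k = drop (Suc j) L ! (k - Suc j)" using a by simp
    moreover have "k - Suc j < length (drop (Suc j) L)" using k a by simp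
    ultimately show ?thesis by (metis Un_iff nth_mem set_append)
  qed
  then show ?thesis unfolding m by simp
qed

lemma add_diff_swap: "b \<in># M \<Longrightarrow> add_mset a M - {#b#} = add_mset a (M - {#b#})"
  using diff_union_single_conv[of b M "{#a#}"] by simp

lemma mset_unc:
  assumes a: "j < length L" "k < length L" "j \<noteq> k"
  shows "mset (unc j k L) = mset (map2 max (L ! j) (L ! k) # map2 min (L ! j) (L ! k) # remove1 (L ! k) (remove1 (L ! j) L))"
proof -
  let ?A = "map2 max (L ! j) (L ! k)" and ?B = "map2 min (L ! j) (L ! k)"
  have b: "L ! k \<in># mset L - {#L ! j#}" by (rule nth_in_diff[OF a])
  have u: "unc j k L = (L[j := ?A])[k := ?B]" unfolding unc_def by simp
  have 1: "mset ((L[j := ?A])[k := ?B]) = add_mset ?B (mset (L[j := ?A]) - {#(L[j := ?A]) ! k#})"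
    using a by (intro mset_update) simp
  have 2: "(L[j := ?A]) ! k = L ! k" using a by simp
  have 3: "mset (L[j := ?A]) = add_mset ?A (mset L - {#L ! j#})"
    using a by (intro mset_update) simp
  have "mset (unc j k L) = add_mset ?B (add_mset ?A (mset L - {#L ! j#}) - {#L ! k#})"
    unfolding u 1 2 3 ..
  also have "\<dots> = add_mset ?B (add_mset ?A (mset L - {#L ! j#} - {#L ! k#}))"
    using add_diff_swap[OF b] by simp
  finally show ?thesis by simp
qed

lemma unc_step:
  assumes r: "sort L \<in> set Rlist" and l: "length L = 4" and jk: "j < 4" "k < 4" "j \<noteq> k"
  shows "sort (unc j k L) \<in> set Rlist"
proof -
  let ?r = "sort L" and ?a = "L ! j" and ?b = "L ! k"
  have ma: "?a \<in> set ?r" using jk l by simp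
  have "?b \<in># mset ?r - {#?a#}" using nth_in_diff[of j L k] jk l by simp
  then have mb: "?b \<in> set (remove1 ?a ?r)" by (simp only: mset_remove1[symmetric] set_mset_mset)
  have "sort (map2 max ?a ?b # map2 min ?a ?b # remove1 ?b (remove1 ?a ?r)) \<in> set Rlist"
    using bspec[OF bspec[OF bspec[OF Rcheck r] ma] mb] .
  moreover have "sort (unc j k L) = sort (map2 max ?a ?b # map2 min ?a ?b # remove1 ?b (remove1 ?a ?r))"
    by (rule sort_mset_eq) (use jk l in \<open>simp add: mset_unc\<close>)
  ultimately show ?thesis by (simp only:)
qed

lemma Wi_cid: "Wi (cid 4) = [[False,False,False,True,True,True],[False,True,True,False,False,True],
   [True,False,True,False,True,False],[True,True,False,True,False,False]]"
proof -
  have "Wi (cid 4) = map (\<lambda>k. map (\<lambda>e. e ! k) rows) [0..<4]"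
    unfolding Wi_def by (rule map_cong, simp, rule map_cong, simp) (use rows_cube in \<open>fastforce simp: cid_def\<close>)
  also have "\<dots> = [[False,False,False,True,True,True],[False,True,True,False,False,True],
   [True,False,True,False,True,False],[True,True,False,True,False,False]]"
    by (simp add: rows_def upt_rec)
  finally show ?thesis .
qed

lemma inv_start: "sort (Wi (cid 4)) \<in> set Rlist"
  unfolding Wi_cid by code_simp

lemma gen4_inv: "h \<in> gen 4 \<Longrightarrow> sort (Wi h) \<in> set Rlist"
proof (induction rule: gen.induct)
  case gid then show ?case by (rule inv_start)
next
  case (gsym h i)
  have "sort (Wi (ccomp 4 (sym_map 4 i) h)) = sort (Wi h)"
    unfolding W_sym[OF gsym.hyps] by (rule sort_mset_eq) (use gsym.hyps in \<open>simp add: mset_swap\<close>)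
  then show ?case using gsym.IH by (simp only:)
next
  case (gtdeg h i)
  then have "sort (unc (i - 1) i (Wi h)) \<in> set Rlist" by (intro unc_step) auto
  then show ?case using gtdeg W_tdeg by (simp only:)
qed




fun bl :: "nat \<Rightarrow> bool list list" where
  "bl 0 = [[]]"
| "bl (Suc n) = concat (map (\<lambda>xs. [False # xs, True # xs]) (bl n))"

lemma cube_bl: "cube n = set (bl n)"
proof (induction n)
  case 0 then show ?case by (auto simp: cube_def)
next
  case (Suc n)
  show ?case
  proof
    show "cube (Suc n) \<subseteq> set (bl (Suc n))"
    proof
      fix x assume "x \<in> cube (Suc n)"
      then obtain b xs where x: "x = b # xs" and "xs \<in> cube n" by (cases x) auto
      then have "xs \<in> set (bl n)" using Suc by simp
      then show "x \<in> set (bl (Suc n))" using x by (cases b) auto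
    qed
    show "set (bl (Suc n)) \<subseteq> cube (Suc n)" using Suc by auto
  qed
qed

lemma cube4: "cube 4 = set (bl 4)"
  by (rule cube_bl)

lemma bl4: "bl 4 = [[False,False,False,False],[True,False,False,False],[False,True,False,False],[True,True,False,False],
  [False,False,True,False],[True,False,True,False],[False,True,True,False],[True,True,True,False],
  [False,False,False,True],[True,False,False,True],[False,True,False,True],[True,True,False,True],
  [False,False,True,True],[True,False,True,True],[False,True,True,True],[True,True,True,True]]"
  by (simp add: numeral_eq_Suc)

definition ftab :: "(bool list \<times> bool list) list" where
  "ftab = [([False,False,False,False], [False,False,False,False]), ([False,False,False,True], [False,False,False,True]), ([False,False,True,False], [False,False,False,True]), ([False,False,True,True], [False,False,True,True]), ([False,True,False,False], [False,False,False,True]), ([False,True,False,True], [False,True,False,True]), ([False,True,True,False], [False,False,True,True]), ([False,True,True,True], [False,True,True,True]), ([True,False,False,False], [False,False,False,True]), ([True,False,False,True], [False,False,True,True]), ([True,False,True,False], [False,True,False,True]), ([True,False,True,True], [False,True,True,True]), ([True,True,False,False], [False,True,False,True]), ([True,True,False,True], [False,True,True,True]), ([True,True,True,False], [False,True,True,True]), ([True,True,True,True], [True,True,True,True])]"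
definition g1tab :: "(bool list \<times> bool list) list" where
  "g1tab = [([False,False,False,False], [False,False,False,False]), ([False,False,False,True], [False,False,False,True]), ([False,False,True,False], [False,False,False,True]), ([False,False,True,True], [False,False,True,True]), ([False,True,False,False], [False,False,False,True]), ([False,True,False,True], [False,False,True,True]), ([False,True,True,False], [False,False,True,True]), ([False,True,True,True], [False,True,True,True]), ([True,False,False,False], [False,False,False,True]), ([True,False,False,True], [False,False,True,True]), ([True,False,True,False], [False,True,False,True]), ([True,False,True,True], [False,True,True,True]), ([True,True,False,False], [False,True,False,True]), ([True,True,False,True], [False,True,True,True]), ([True,True,True,False], [False,True,True,True]), ([True,True,True,True], [True,True,True,True])]"
definition g2tab :: "(bool list \<times> bool list) list" where
  "g2tab = [([False,False,False,False], [False,False,False,False]), ([False,False,False,True], [False,False,False,True]), ([False,False,True,False], [False,False,False,True]), ([False,False,True,True], [False,False,True,True]), ([False,True,False,False], [False,False,False,True]), ([False,True,False,True], [False,True,False,True]), ([False,True,True,False], [False,False,True,True]), ([False,True,True,True], [False,True,True,True]), ([True,False,False,False], [False,False,False,True]), ([True,False,False,True], [False,False,True,True]), ([True,False,True,False], [False,True,False,True]), ([True,False,True,True], [False,True,True,True]), ([True,True,False,False], [False,False,True,True]), ([True,True,False,True], [False,True,True,True]), ([True,True,True,False], [False,True,True,True]), ([True,True,True,True], [True,True,True,True])]"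

definition fw :: "bool list \<Rightarrow> bool list" where
  "fw = restrict (\<lambda>x. the (map_of ftab x)) (cube 4)"
definition g1 :: "bool list \<Rightarrow> bool list" where
  "g1 = restrict (\<lambda>x. the (map_of g1tab x)) (cube 4)"
definition g2 :: "bool list \<Rightarrow> bool list" where
  "g2 = restrict (\<lambda>x. the (map_of g2tab x)) (cube 4)"

lemma ext_eq4: "f \<in> extensional (cube 4) \<Longrightarrow> g \<in> extensional (cube 4) \<Longrightarrow>
   (\<forall>x\<in>set (bl 4). f x = g x) \<Longrightarrow> f = g"
  by (rule extensionalityI[of f "cube 4" g]) (auto simp: cube4)

lemma fw_chat: "(4, 4, fw) \<in> chat"
proof -
  have 1: "\<forall>x\<in>set (bl 4). the (map_of ftab x) \<in> set (bl 4)"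
    by code_simp
  have 2: "\<forall>x\<in>set (bl 4). \<forall>y\<in>set (bl 4). length x = length y \<and> list_all2 (\<lambda>a b. a \<longrightarrow> b) x y \<and> x \<noteq> y \<longrightarrow>
     length (the (map_of ftab x)) = length (the (map_of ftab y)) \<and>
     list_all2 (\<lambda>a b. a \<longrightarrow> b) (the (map_of ftab x)) (the (map_of ftab y)) \<and> the (map_of ftab x) \<noteq> the (map_of ftab y)"
    by code_simp
  have 3: "\<forall>x\<in>set (bl 4). \<forall>y\<in>set (bl 4). hl x y = 1 \<longrightarrow> hl (the (map_of ftab x)) (the (map_of ftab y)) = 1"
    unfolding hl_def by code_simp
  show ?thesis unfolding chat_iff cle_alt
    using 1 2 3 by (simp add: fw_def cube4 del: in_cube)
qed

lemma Wi_fw: "Wi fw = [[False,False,False,False,False,False],[False,True,False,False,True,True],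
  [True,False,True,True,False,False],[True,True,True,True,True,True]]"
proof -
  have "Wi fw = map (\<lambda>k. map (\<lambda>e. the (map_of ftab e) ! k) rows) [0..<4]"
    unfolding Wi_def by (rule map_cong, simp, rule map_cong, simp) (use rows_cube in \<open>fastforce simp: fw_def\<close>)
  also have "\<dots> = [[False,False,False,False,False,False],[False,True,False,False,True,True],
  [True,False,True,True,False,False],[True,True,True,True,True,True]]"
    by code_simp
  finally show ?thesis .
qed

lemma fw_not_gen: "fw \<notin> gen 4"
proof
  assume "fw \<in> gen 4"
  then have "sort (Wi fw) \<in> set Rlist" by (rule gen4_inv)
  moreover have "sort (Wi fw) \<notin> set Rlist" unfolding Wi_fw by code_simp
  ultimately show False by simp
qed

lemma fw_not_cbar: "(4, 4, fw) \<notin> cbar"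
  using cbar_gen fw_not_gen by blast




lemma sym_eval: "length y = n \<Longrightarrow> sym_map n i y = y[i - 1 := y ! i, i := y ! (i - 1)]"
  by (simp add: sym_map_def)

lemma tdeg_eval: "length y = n \<Longrightarrow> tdeg n i y = y[i - 1 := max (y ! (i - 1)) (y ! i), i := min (y ! (i - 1)) (y ! i)]"
  by (simp add: tdeg_def)

lemma cid_eval: "length y = n \<Longrightarrow> cid n y = y"
  by (simp add: cid_def)

lemma ccomp_eval: "length x = l \<Longrightarrow> ccomp l g f x = g (f x)"
  by (simp add: ccomp_def)

lemma g1_term: "g1 = ccomp 4 (sym_map 4 1) (ccomp 4 (tdeg 4 1) (ccomp 4 (sym_map 4 2) (ccomp 4 (tdeg 4 2) (ccomp 4 (sym_map 4 3) (ccomp 4 (tdeg 4 3) (ccomp 4 (sym_map 4 2) (ccomp 4 (sym_map 4 1) (ccomp 4 (tdeg 4 1) (ccomp 4 (tdeg 4 2) (cid 4))))))))))"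
proof (rule ext_eq4)
  show "g1 \<in> extensional (cube 4)" by (simp add: g1_def)
  show "(ccomp 4 (sym_map 4 1) (ccomp 4 (tdeg 4 1) (ccomp 4 (sym_map 4 2) (ccomp 4 (tdeg 4 2) (ccomp 4 (sym_map 4 3) (ccomp 4 (tdeg 4 3) (ccomp 4 (sym_map 4 2) (ccomp 4 (sym_map 4 1) (ccomp 4 (tdeg 4 1) (ccomp 4 (tdeg 4 2) (cid 4))))))))))) \<in> extensional (cube 4)" by (simp add: ccomp_def)
  show "\<forall>x\<in>set (bl 4). g1 x = (ccomp 4 (sym_map 4 1) (ccomp 4 (tdeg 4 1) (ccomp 4 (sym_map 4 2) (ccomp 4 (tdeg 4 2) (ccomp 4 (sym_map 4 3) (ccomp 4 (tdeg 4 3) (ccomp 4 (sym_map 4 2) (ccomp 4 (sym_map 4 1) (ccomp 4 (tdeg 4 1) (ccomp 4 (tdeg 4 2) (cid 4))))))))))) x"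
    unfolding bl4 by (simp add: g1_def g1tab_def ccomp_eval sym_eval tdeg_eval cid_eval)
qed

lemma g2_term: "g2 = ccomp 4 (sym_map 4 3) (ccomp 4 (tdeg 4 3) (ccomp 4 (sym_map 4 1) (ccomp 4 (tdeg 4 1) (ccomp 4 (sym_map 4 2) (ccomp 4 (sym_map 4 3) (ccomp 4 (tdeg 4 3) (ccomp 4 (sym_map 4 1) (ccomp 4 (tdeg 4 1) (ccomp 4 (sym_map 4 2) (cid 4))))))))))"
proof (rule ext_eq4)
  show "g2 \<in> extensional (cube 4)" by (simp add: g2_def)
  show "(ccomp 4 (sym_map 4 3) (ccomp 4 (tdeg 4 3) (ccomp 4 (sym_map 4 1) (ccomp 4 (tdeg 4 1) (ccomp 4 (sym_map 4 2) (ccomp 4 (sym_map 4 3) (ccomp 4 (tdeg 4 3) (ccomp 4 (sym_map 4 1) (ccomp 4 (tdeg 4 1) (ccomp 4 (sym_map 4 2) (cid 4))))))))))) \<in> extensional (cube 4)" by (simp add: ccomp_def)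
  show "\<forall>x\<in>set (bl 4). g2 x = (ccomp 4 (sym_map 4 3) (ccomp 4 (tdeg 4 3) (ccomp 4 (sym_map 4 1) (ccomp 4 (tdeg 4 1) (ccomp 4 (sym_map 4 2) (ccomp 4 (sym_map 4 3) (ccomp 4 (tdeg 4 3) (ccomp 4 (sym_map 4 1) (ccomp 4 (tdeg 4 1) (ccomp 4 (sym_map 4 2) (cid 4))))))))))) x"
    unfolding bl4 by (simp add: g2_def g2tab_def ccomp_eval sym_eval tdeg_eval cid_eval)
qed

lemma g1_gen: "g1 \<in> gen 4"
  unfolding g1_term by (intro gen.intros) auto

lemma g2_gen: "g2 \<in> gen 4"
  unfolding g2_term by (intro gen.intros) auto




definition pt :: "bool list \<Rightarrow> bool list \<Rightarrow> bool list" where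
  "pt v = restrict (\<lambda>_. v) (cube 0)"

lemma cube0: "cube 0 = {[]}" by (auto simp: cube_def)

lemma pt_cbar: "v \<in> cube n \<Longrightarrow> (0, n, pt v) \<in> cbar"
proof (induction v arbitrary: n)
  case Nil
  then have n: "n = 0" by simp
  have "pt [] = cid 0" unfolding pt_def cid_def cube0 by (rule ext) simp
  then show ?case using n cbar.idI by metis
next
  case (Cons a v)
  then obtain m where n: "n = Suc m" and v: "v \<in> cube m" by (cases n) auto
  have 1: "(0, m, pt v) \<in> cbar" using Cons.IH v by blast
  have 2: "(m, Suc m, face (Suc m) 1 a) \<in> cbar" using cbar.faceI[of "Suc m" 1 a] by simp
  have "ccomp 0 (face (Suc m) 1 a) (pt v) = pt (a # v)"
    unfolding ccomp_def pt_def cube0 by (rule ext) (use v in \<open>simp add: face_def\<close>)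
  then show ?case using cbar.compI[OF 1 2] n by simp
qed

lemma g1_agree: "x \<in> cube 4 \<Longrightarrow> x \<noteq> [False,True,False,True] \<Longrightarrow> g1 x = fw x"
proof -
  have "\<forall>x\<in>set (bl 4). x \<noteq> [False,True,False,True] \<longrightarrow> the (map_of g1tab x) = the (map_of ftab x)"
    by code_simp
  then show "x \<in> cube 4 \<Longrightarrow> x \<noteq> [False,True,False,True] \<Longrightarrow> g1 x = fw x"
    by (simp add: g1_def fw_def cube4 del: in_cube)
qed

lemma g2_agree: "x \<in> cube 4 \<Longrightarrow> x \<noteq> [True,True,False,False] \<Longrightarrow> g2 x = fw x"
proof -
  have "\<forall>x\<in>set (bl 4). x \<noteq> [True,True,False,False] \<longrightarrow> the (map_of g2tab x) = the (map_of ftab x)"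
    by code_simp
  then show "x \<in> cube 4 \<Longrightarrow> x \<noteq> [True,True,False,False] \<Longrightarrow> g2 x = fw x"
    by (simp add: g2_def fw_def cube4 del: in_cube)
qed

lemma small_cube_cmp: "k \<le> 1 \<Longrightarrow> y \<in> cube k \<Longrightarrow> y' \<in> cube k \<Longrightarrow> cle y y' \<or> cle y' y"
proof -
  assume "k \<le> 1" "y \<in> cube k" "y' \<in> cube k"
  then have "(y = [] \<and> y' = []) \<or> (\<exists>a b. y = [a] \<and> y' = [b])"
    by (cases y; cases y') (auto simp: le_Suc_eq)
  then show ?thesis by (auto simp: cle_def)
qed

lemma p12_incomp: "\<not> cle [False,True,False,True] [True,True,False,False]"
   "\<not> cle [True,True,False,False] [False,True,False,True]"
  by (auto simp: cle_def)

lemma F_in: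
  assumes k: "k \<le> 1" and x: "(k, 4, x) \<in> cbar"
  shows "(k, 4, ccomp k fw x) \<in> cbar"
proof -
  have xc: "(k, 4, x) \<in> chat" using cbar_chat[OF x] .
  then have xm: "\<forall>y\<in>cube k. x y \<in> cube 4"
    and xs: "\<forall>y\<in>cube k. \<forall>y'\<in>cube k. cle y y' \<and> y \<noteq> y' \<longrightarrow> cle (x y) (x y') \<and> x y \<noteq> x y'"
    unfolding chat_iff by blast+
  show ?thesis
  proof (cases "\<exists>y0\<in>cube k. x y0 = [False,True,False,True]")
    case False
    have "ccomp k fw x = ccomp k g1 x"
      unfolding ccomp_def by (rule ext) (use False xm g1_agree in \<open>auto simp del: in_cube\<close>)
    then show ?thesis using cbar.compI[OF x gen_cbar[OF g1_gen]] by simp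
  next
    case True
    then obtain y0 where y0: "y0 \<in> cube k" "x y0 = [False,True,False,True]" by blast
    have nz: "x y \<noteq> [True,True,False,False]" if y: "y \<in> cube k" for y
    proof (cases "y = y0")
      case True then show ?thesis using y0 by simp
    next
      case False
      then have "cle (x y) (x y0) \<or> cle (x y0) (x y)"
        using xs small_cube_cmp[OF k y y0(1)] y y0(1) by blast
      then show ?thesis using y0 p12_incomp by auto
    qed
    have "ccomp k fw x = ccomp k g2 x"
      unfolding ccomp_def by (rule ext) (use nz xm g2_agree in \<open>auto simp del: in_cube\<close>)
    then show ?thesis using cbar.compI[OF x gen_cbar[OF g2_gen]] by simp
  qed
qed

lemma F_nat: "trunc_nat cbar 4 4 (\<lambda>k x. ccomp k fw x)"
  unfolding trunc_nat_def
proof (intro conjI allI impI ballI)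
  fix k x assume "k \<le> (1::nat)" "x \<in> hom cbar k 4"
  then show "ccomp k fw x \<in> hom cbar k 4" using F_in by (simp add: hom_def)
next
  fix j k u x assume "j \<le> (1::nat)" "k \<le> (1::nat)" "u \<in> hom cbar j k" "x \<in> hom cbar k 4"
  then have "(j, k, u) \<in> chat" using cbar_chat by (simp add: hom_def)
  then have "\<forall>y\<in>cube j. u y \<in> cube k" unfolding chat_iff by blast
  then show "ccomp j fw (ccomp j x u) = ccomp j (ccomp k fw x) u"
    using ccomp_assoc[of j u k fw x] by simp
qed

lemma not_shell: "\<not> shell_complete cbar"
proof
  assume sc: "shell_complete cbar"
  have "\<forall>F. trunc_nat cbar 4 4 F \<longrightarrow> (\<exists>g\<in>hom cbar 4 4. \<forall>k\<le>1. \<forall>x\<in>hom cbar k 4. F k x = ccomp k g x)"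
    using sc unfolding shell_complete_def
    apply (erule_tac x=4 in allE)
    apply (erule impE, simp)
    apply (erule_tac x=4 in allE)
    apply (erule conjE)
    apply assumption
    done
  then have "\<exists>g\<in>hom cbar 4 4. \<forall>k\<le>1. \<forall>x\<in>hom cbar k 4. ccomp k fw x = ccomp k g x"
    using F_nat by blast
  then obtain g where g: "g \<in> hom cbar 4 4"
    and eq: "\<forall>k\<le>1. \<forall>x\<in>hom cbar k 4. ccomp k fw x = ccomp k g x"
    by blast
  have gc: "(4, 4, g) \<in> chat" using g cbar_chat by (simp add: hom_def)
  have "fw = g"
  proof (rule extensionalityI[of fw "cube 4" g])
    show "fw \<in> extensional (cube 4)" by (simp add: fw_def)
    show "g \<in> extensional (cube 4)" using gc unfolding chat_iff by blast
    fix v assume v: "v \<in> cube 4"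
    have "pt v \<in> hom cbar 0 4" using pt_cbar[OF v] by (simp add: hom_def)
    then have "ccomp 0 fw (pt v) [] = ccomp 0 g (pt v) []" using eq by auto
    then show "fw v = g v" by (simp add: ccomp_def pt_def cube0)
  qed
  then have "(4, 4, fw) \<in> cbar" using g by (simp add: hom_def)
  then show False using fw_not_cbar by simp
qed

theorem theorem7p16:
  shows "\<not> shell_complete cbar \<and> cbar \<subset> chat"
proof
  show "\<not> shell_complete cbar" by (rule not_shell)
  have "cbar \<subseteq> chat" using cbar_chat by auto
  moreover have "(4, 4, fw) \<in> chat - cbar" using fw_chat fw_not_cbar by simp
  ultimately show "cbar \<subset> chat" by blast
qed


end
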